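(* Let $P$ be an $n\times n$ non-negative matrix that is diagonally dominant, i.e. $P(i,i)\ge\sum_{j\ne i}P(i,j)$ for $1\le i\le n$. Then $$\max_{Q\in\Omega_n}CW(P,Q)=\max_{Q\in RS_n}CW(P,Q)=\sum_{1\le i\le n}\log(P(i,i)).$$
   Context: $\Omega_n$ is the set of $n\times n$ doubly-stochastic matrices and $RS_n$ the set of $n\times n$ row-stochastic matrices (non-negative entries, each row sums to $1$). For non-negative $n\times n$ matrices $P,Q$, $$CW(P,Q)=\sum_{i,j}(1-Q(i,j))\log(1-Q(i,j)) - \sum_{i,j}Q(i,j)\log\!\left(\frac{Q(i,j)}{P(i,j)}\right),$$ with the conventions $0^0=1$ (a term with $Q(i,j)=0$ contributes $0$), a term with $Q(i,j)>0=P(i,j)$ equals $-\infty$, and $\log 0=-\infty$. *)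

theory Defs
  imports "HOL-Analysis.Analysis"
begin

text \<open>n x n matrices are rendered as real^'n^'n with 'n a finite type (n = CARD('n)).\<close>

definition doubly_stochastic :: "(real^'n::finite^'n) set" where
  "doubly_stochastic = {Q. (\<forall>i j. 0 \<le> Q$i$j) \<and> (\<forall>i. (\<Sum>j\<in>UNIV. Q$i$j) = 1)
                           \<and> (\<forall>j. (\<Sum>i\<in>UNIV. Q$i$j) = 1)}"

definition row_stochastic :: "(real^'n::finite^'n) set" where
  "row_stochastic = {Q. (\<forall>i j. 0 \<le> Q$i$j) \<and> (\<forall>i. (\<Sum>j\<in>UNIV. Q$i$j) = 1)}"

definition xlogx :: "real \<Rightarrow> real" where
  "xlogx x = (if x = 0 then 0 else x * ln x)"

text \<open>Single (i,j) term of CW, valued in the extended reals: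
  (1-q) log(1-q) - q log(q/p), where a term with q = 0 contributes 0 to the second sum
  and a term with q > 0 = p equals -infinity.\<close>
definition CW_term :: "real \<Rightarrow> real \<Rightarrow> ereal" where
  "CW_term p q = (if q = 0 then ereal (xlogx (1 - q))
                  else if p = 0 then -\<infinity>
                  else ereal (xlogx (1 - q) - q * ln (q / p)))"

definition CW :: "real^'n::finite^'n \<Rightarrow> real^'n^'n \<Rightarrow> ereal" where
  "CW P Q = (\<Sum>i\<in>UNIV. \<Sum>j\<in>UNIV. CW_term (P$i$j) (Q$i$j))"

definition elog :: "real \<Rightarrow> ereal" where
  "elog x = (if x = 0 then -\<infinity> else ereal (ln x))"

end

theory Submission
  imports Defs
begin

lemma xlnx_convex: "convex_on {0<..} (\<lambda>y::real. y * ln y)"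
proof (rule convex_on_realI[where f'="\<lambda>y. ln y + 1"])
  show "connected {(0::real)<..}" by simp
  fix x :: real assume "x \<in> {0<..}"
  then show "((\<lambda>y. y * ln y) has_real_derivative ln x + 1) (at x)"
    by (auto intro!: derivative_eq_intros)
next
  fix x y :: real assume "x \<in> {0<..}" "y \<in> {0<..}" "x \<le> y"
  then show "ln x + 1 \<le> ln y + 1" by simp
qed

lemma chord:
  fixes x s :: real
  assumes "0 \<le> x" "x \<le> s" "0 < s" "s \<le> 1"
  shows "xlogx (1 - x) \<le> x / s * xlogx (1 - s)"
proof (cases "x = s")
  case True then show ?thesis using assms by simp
next
  case False
  then have xs: "x < s" using assms by simp
  show ?thesis
  proof (cases "s = 1")
    case True
    then have "1 - x > 0" "1 - x \<le> 1" using xs assms by auto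
    then have "ln (1 - x) \<le> 0" by simp
    then have "(1 - x) * ln (1 - x) \<le> 0" using \<open>1 - x > 0\<close>
      by (simp add: mult_nonneg_nonpos)
    then show ?thesis using True by (simp add: xlogx_def)
  next
    case False
    then have s1: "1 - s > 0" using assms by simp
    define t where "t = x / s"
    have t0: "0 \<le> t" "t \<le> 1" using assms by (auto simp: t_def)
    have eq: "(1 - t) *\<^sub>R (1::real) + t *\<^sub>R (1 - s) = 1 - x"
      using assms by (simp add: t_def field_simps)
    have "(\<lambda>y::real. y * ln y) ((1 - t) *\<^sub>R 1 + t *\<^sub>R (1 - s))
          \<le> (1 - t) * (1 * ln 1) + t * ((1 - s) * ln (1 - s))"
      by (rule convex_onD[OF xlnx_convex]) (use t0 s1 in auto)
    then have "(1 - x) * ln (1 - x) \<le> t * ((1 - s) * ln (1 - s))"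
      unfolding eq by simp
    then show ?thesis using s1 xs by (simp add: xlogx_def t_def)
  qed
qed

lemma real_row:
  fixes p q :: "'n::finite \<Rightarrow> real"
  assumes pn: "\<forall>j. 0 \<le> p j" and qn: "\<forall>j. 0 \<le> q j" and qs: "sum q UNIV = 1"
    and dd: "sum p (UNIV - {i}) \<le> p i" and pi: "p i > 0"
    and pos: "\<forall>j. q j > 0 \<longrightarrow> p j > 0"
  shows "(\<Sum>j\<in>UNIV. xlogx (1 - q j) - q j * ln (q j / p j)) \<le> ln (p i)"
proof -
  define s where "s = 1 - q i"
  have ssum: "sum q (UNIV - {i}) = s"
    using qs sum.remove[of UNIV i q] by (simp add: s_def)
  have s0: "0 \<le> s" using ssum qn by (metis sum_nonneg)
  have qle: "q j \<le> s" if "j \<noteq> i" for j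
  proof -
    have "q j \<le> sum q (UNIV - {i})"
      by (rule member_le_sum) (use qn that in auto)
    then show ?thesis using ssum by simp
  qed
  have A: "(\<Sum>j\<in>UNIV - {i}. xlogx (1 - q j)) \<le> xlogx (q i)"
  proof (cases "s = 0")
    case True
    then have "\<forall>j\<in>UNIV - {i}. q j = 0" using qle qn by (metis DiffD2 antisym singletonI)
    then show ?thesis using True by (simp add: s_def xlogx_def)
  next
    case False
    then have sp: "s > 0" using s0 by simp
    have "(\<Sum>j\<in>UNIV - {i}. xlogx (1 - q j)) \<le> (\<Sum>j\<in>UNIV - {i}. q j / s * xlogx (1 - s))"
      by (rule sum_mono, rule chord) (use qn qle sp s_def in auto)
    also have "\<dots> = (sum q (UNIV - {i})) / s * xlogx (1 - s)"
      by (simp add: sum_distrib_right sum_divide_distrib)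
    also have "\<dots> = xlogx (q i)" using ssum sp by (simp add: s_def)
    finally show ?thesis .
  qed
  have B: "(\<Sum>j\<in>UNIV - {i}. - (q j * ln (q j / p j))) \<le> s * ln (p i) - xlogx s"
  proof (cases "s = 0")
    case True
    then have "\<forall>j\<in>UNIV - {i}. q j = 0" using qle qn by (metis DiffD2 antisym singletonI)
    then show ?thesis using True by (simp add: xlogx_def)
  next
    case False
    then have sp: "s > 0" using s0 by simp
    have trm: "- (q j * ln (q j / p j)) \<le> q j * ln (p i) - q j * ln s + p j * s / p i - q j" for j
    proof (cases "q j = 0")
      case True then show ?thesis using pn pi sp by simp
    next
      case False
      then have qp: "q j > 0" using qn by (simp add: less_le)
      then have pp: "p j > 0" using pos by simp
      define z where "z = p j * s / (q j * p i)"
      have zp: "z > 0" using qp pp sp pi by (simp add: z_def)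
      have lz: "ln z \<le> z - 1" using zp by (rule ln_le_minus_one)
      have lnz: "ln z = ln (p j) + ln s - ln (q j) - ln (p i)"
        using qp pp sp pi by (simp add: z_def ln_div ln_mult)
      have lq: "ln (q j / p j) = ln (q j) - ln (p j)" using qp pp by (simp add: ln_div)
      have "q j * ln z \<le> q j * (z - 1)" using lz qp by (simp add: mult_left_mono)
      also have "q j * (z - 1) = p j * s / p i - q j" using qp pi by (simp add: z_def field_simps)
      finally have "q j * ln z \<le> p j * s / p i - q j" .
      then show ?thesis unfolding lq using lnz by (simp add: algebra_simps)
    qed
    have "(\<Sum>j\<in>UNIV - {i}. - (q j * ln (q j / p j)))
       \<le> (\<Sum>j\<in>UNIV - {i}. q j * ln (p i) - q j * ln s + p j * s / p i - q j)"
      by (rule sum_mono) (rule trm)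
    also have "\<dots> = s * ln (p i) - s * ln s + (sum p (UNIV - {i})) * s / p i - s"
      using ssum by (simp add: sum.distrib sum_subtractf sum_distrib_right [symmetric] sum_divide_distrib [symmetric])
    also have "\<dots> \<le> s * ln (p i) - s * ln s"
    proof -
      have "(sum p (UNIV - {i})) * s / p i \<le> p i * s / p i"
        using dd sp pi by (intro divide_right_mono mult_right_mono) auto
      then show ?thesis using pi by simp
    qed
    also have "\<dots> = s * ln (p i) - xlogx s" using sp by (simp add: xlogx_def)
    finally show ?thesis .
  qed
  have C: "xlogx (1 - q i) - q i * ln (q i / p i) = xlogx s - xlogx (q i) + q i * ln (p i)"
  proof (cases "q i = 0")
    case True then show ?thesis by (simp add: s_def xlogx_def)
  next
    case False
    then have "q i > 0" using qn by (simp add: less_le)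
    then show ?thesis using pi by (simp add: s_def xlogx_def ln_div algebra_simps)
  qed
  have "(\<Sum>j\<in>UNIV. xlogx (1 - q j) - q j * ln (q j / p j))
      = (xlogx (1 - q i) - q i * ln (q i / p i))
        + ((\<Sum>j\<in>UNIV - {i}. xlogx (1 - q j)) + (\<Sum>j\<in>UNIV - {i}. - (q j * ln (q j / p j))))"
    by (simp add: sum.remove[of UNIV i] sum.distrib sum_negf sum_subtractf)
  also have "\<dots> \<le> (xlogx s - xlogx (q i) + q i * ln (p i)) + (xlogx (q i) + (s * ln (p i) - xlogx s))"
    using A B C by linarith
  also have "\<dots> = (q i + s) * ln (p i)" by (simp add: algebra_simps)
  also have "\<dots> = ln (p i)" by (simp add: s_def)
  finally show ?thesis .
qed

lemma CW_term_not_inf: "CW_term p q \<noteq> \<infinity>"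
  by (simp add: CW_term_def)

lemma sum_minf:
  fixes f :: "'n::finite \<Rightarrow> ereal"
  assumes "f j = -\<infinity>" "\<forall>k. f k \<noteq> \<infinity>"
  shows "sum f UNIV = -\<infinity>"
proof -
  have "sum f (UNIV - {j}) \<noteq> \<infinity>" using assms(2) by (simp add: sum_Pinfty)
  then show ?thesis using assms(1) by (simp add: sum.remove[of UNIV j])
qed

lemma row_bound:
  fixes p q :: "'n::finite \<Rightarrow> real"
  assumes pn: "\<forall>j. 0 \<le> p j" and qn: "\<forall>j. 0 \<le> q j" and qs: "sum q UNIV = 1"
    and dd: "sum p (UNIV - {i}) \<le> p i"
  shows "(\<Sum>j\<in>UNIV. CW_term (p j) (q j)) \<le> elog (p i)"
proof (cases "\<exists>j. q j > 0 \<and> p j = 0")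
  case True
  then obtain j where "q j > 0" "p j = 0" by blast
  then have "CW_term (p j) (q j) = -\<infinity>" by (simp add: CW_term_def)
  then have "(\<Sum>j\<in>UNIV. CW_term (p j) (q j)) = -\<infinity>"
    by (rule sum_minf) (simp add: CW_term_not_inf)
  then show ?thesis by simp
next
  case False
  then have pos: "\<forall>j. q j > 0 \<longrightarrow> p j > 0" using pn by (metis less_le)
  have pi: "p i > 0"
  proof (rule ccontr)
    assume "\<not> p i > 0"
    then have "p i = 0" using pn by (metis less_le)
    then have "sum p (UNIV - {i}) = 0" using dd pn
      by (metis antisym sum_nonneg)
    then have "\<forall>j\<in>UNIV - {i}. p j = 0" using pn by (simp add: sum_nonneg_eq_0_iff)
    with \<open>p i = 0\<close> have "\<forall>j. p j = 0" by blast
    then have "\<forall>j. q j = 0" using pos qn by (metis less_le less_irrefl)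
    then show False using qs by simp
  qed
  have "\<forall>j. CW_term (p j) (q j) = ereal (xlogx (1 - q j) - q j * ln (q j / p j))"
  proof
    fix j show "CW_term (p j) (q j) = ereal (xlogx (1 - q j) - q j * ln (q j / p j))"
      using pos qn[rule_format, of j] by (auto simp: CW_term_def less_le)
  qed
  then have "(\<Sum>j\<in>UNIV. CW_term (p j) (q j)) = ereal (\<Sum>j\<in>UNIV. xlogx (1 - q j) - q j * ln (q j / p j))"
    by simp
  also have "\<dots> \<le> ereal (ln (p i))"
    using real_row[OF pn qn qs dd pi pos] by simp
  also have "\<dots> = elog (p i)" using pi by (simp add: elog_def)
  finally show ?thesis .
qed

theorem corollary5p10:
  fixes P :: "real^'n::finite^'n"
  assumes nonneg: "\<forall>i j. 0 \<le> P$i$j"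
    and diagdom: "\<forall>i. P$i$i \<ge> (\<Sum>j\<in>UNIV - {i}. P$i$j)"
  shows "(\<exists>Q\<in>doubly_stochastic. CW P Q = (\<Sum>i\<in>UNIV. elog (P$i$i)))
       \<and> (\<forall>Q\<in>doubly_stochastic. CW P Q \<le> (\<Sum>i\<in>UNIV. elog (P$i$i)))
       \<and> (\<exists>Q\<in>row_stochastic. CW P Q = (\<Sum>i\<in>UNIV. elog (P$i$i)))
       \<and> (\<forall>Q\<in>row_stochastic. CW P Q \<le> (\<Sum>i\<in>UNIV. elog (P$i$i)))"
proof -
  define I :: "real^'n^'n" where "I = mat 1"
  have Ie: "I $ i $ j = (if i = j then 1 else 0)" for i j by (simp add: I_def mat_def)
  have Ids: "I \<in> doubly_stochastic"
    unfolding doubly_stochastic_def by (simp add: Ie)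
  have Irs: "I \<in> row_stochastic"
    unfolding row_stochastic_def by (simp add: Ie)
  have rowI: "(\<Sum>j\<in>UNIV. CW_term (P$i$j) (I$i$j)) = elog (P$i$i)" for i
  proof -
    have "(\<Sum>j\<in>UNIV. CW_term (P$i$j) (I$i$j)) = CW_term (P$i$i) 1 + (\<Sum>j\<in>UNIV - {i}. CW_term (P$i$j) (I$i$j))"
      by (simp add: sum.remove[of UNIV i] Ie)
    also have "(\<Sum>j\<in>UNIV - {i}. CW_term (P$i$j) (I$i$j)) = 0"
      by (rule sum.neutral) (auto simp: Ie CW_term_def xlogx_def zero_ereal_def)
    also have "CW_term (P$i$i) 1 = elog (P$i$i)"
      by (simp add: CW_term_def elog_def xlogx_def ln_div)
    finally show ?thesis by simp
  qed
  have eqI: "CW P I = (\<Sum>i\<in>UNIV. elog (P$i$i))"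
    unfolding CW_def by (simp add: rowI)
  have rs: "\<forall>Q\<in>row_stochastic. CW P Q \<le> (\<Sum>i\<in>UNIV. elog (P$i$i))"
  proof
    fix Q :: "real^'n^'n" assume "Q \<in> row_stochastic"
    then have qn: "\<forall>i j. 0 \<le> Q$i$j" and qs: "\<forall>i. (\<Sum>j\<in>UNIV. Q$i$j) = 1"
      by (auto simp: row_stochastic_def)
    show "CW P Q \<le> (\<Sum>i\<in>UNIV. elog (P$i$i))"
      unfolding CW_def
      by (rule sum_mono, rule row_bound) (use nonneg qn qs diagdom in auto)
  qed
  have "doubly_stochastic \<subseteq> (row_stochastic :: (real^'n^'n) set)"
    by (auto simp: doubly_stochastic_def row_stochastic_def)
  then show ?thesis using rs eqI Ids Irs by blast
qed

end
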